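(* Let $k,d\in\mathbb{N}$ and $m,n\in\{1,\dots,d\}$. Define $\Delta_{m,n}:\mathbb{R}^{d\times d}\to\mathbb{R}^{d\times d}$ by $[\Delta_{m,n}(X)]_{m',n'}=[X]_{m,n}$ if $(m',n')=(m,n)$ and $0$ otherwise. Then there exist $r\in\mathbb N$ with $r\leq \frac{5}{2}d-1$ and kernels $K^1,\dots,K^r\in\mathbb{R}^{(2k+1)\times(2k+1)}$ (depending on $m,n$) such that for all $X\in[0,1]^{d\times d}$, $$\Delta_{m,n}(X)=K^r*(\cdots*(K^2*(K^1*X))\cdots).$$
   Context: Single-channel zero-padding convolution: for $K\in\mathbb R^{(2k+1)\times(2k+1)}$ with entries $[K]_{s,t}$, $s,t\in\{-k,\dots,k\}$, and $X\in\mathbb R^{d\times d}$, $[K*X]_{m,n}=\sum_{s,t=-k}^k[K]_{s,t}[\iota(X)]_{m+s,n+t}$ for $m,n\in\{1,\dots,d\}$, where $[\iota(X)]_{a,b}=[X]_{a,b}$ if $a,b\in\{1,\dots,d\}$ and $0$ for other $a,b\in\mathbb Z$. *)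

theory Defs
  imports Complex_Main
begin

text \<open>A d x d real matrix is represented as a function int => int => real whose
entries at indices (a,b) with a,b in {1..d} are the matrix entries (other values ignored).
A (2k+1)x(2k+1) kernel is a function int => int => real whose entries at (s,t)
with s,t in {-k..k} are the kernel entries (other values ignored).\<close>

definition iota :: "nat \<Rightarrow> (int \<Rightarrow> int \<Rightarrow> real) \<Rightarrow> int \<Rightarrow> int \<Rightarrow> real" where
  "iota d X a b = (if a \<in> {1..int d} \<and> b \<in> {1..int d} then X a b else 0)"

definition conv :: "nat \<Rightarrow> nat \<Rightarrow> (int \<Rightarrow> int \<Rightarrow> real) \<Rightarrow> (int \<Rightarrow> int \<Rightarrow> real) \<Rightarrow> int \<Rightarrow> int \<Rightarrow> real" where
  "conv k d K X m n =
     (\<Sum>s\<in>{-int k..int k}. \<Sum>t\<in>{-int k..int k}. K s t * iota d X (m + s) (n + t))"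

fun conv_chain :: "nat \<Rightarrow> nat \<Rightarrow> (nat \<Rightarrow> int \<Rightarrow> int \<Rightarrow> real) \<Rightarrow> nat \<Rightarrow> (int \<Rightarrow> int \<Rightarrow> real) \<Rightarrow> int \<Rightarrow> int \<Rightarrow> real" where
  "conv_chain k d Ks 0 X = X"
| "conv_chain k d Ks (Suc r) X = conv k d (Ks (Suc r)) (conv_chain k d Ks r X)"

definition Delta :: "int \<Rightarrow> int \<Rightarrow> (int \<Rightarrow> int \<Rightarrow> real) \<Rightarrow> int \<Rightarrow> int \<Rightarrow> real" where
  "Delta m n X m' n' = (if (m', n') = (m, n) then X m n else 0)"

end

theory Submission
  imports Defs
begin

lemma sum_delta2:
  fixes f :: "int \<Rightarrow> int \<Rightarrow> real"
  assumes "p \<in> S" "q \<in> S" "finite S"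
  shows "(\<Sum>s\<in>S. \<Sum>t\<in>S. (if s = p \<and> t = q then 1 else 0) * f s t) = f p q"
proof -
  have "(\<Sum>s\<in>S. \<Sum>t\<in>S. (if s = p \<and> t = q then 1 else 0) * f s t)
      = (\<Sum>s\<in>S. if s = p then (\<Sum>t\<in>S. if t = q then f s t else 0) else 0)"
    by (rule sum.cong) (auto intro: sum.cong)
  also have "\<dots> = f p q" using assms by simp
  finally show ?thesis .
qed

lemma conv_shift:
  assumes "\<bar>p\<bar> \<le> int k" "\<bar>q\<bar> \<le> int k"
  shows "conv k d (\<lambda>s t. if s = p \<and> t = q then 1 else 0) Y x y = iota d Y (x + p) (y + q)"
  unfolding conv_def
  by (rule sum_delta2[where f = "\<lambda>s t. iota d Y (x + s) (y + t)"]) (use assms in auto)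

lemma chain_path:
  fixes c e :: "nat \<Rightarrow> int"
  assumes steps: "\<And>j. \<bar>c j - c (Suc j)\<bar> \<le> int k \<and> \<bar>e j - e (Suc j)\<bar> \<le> int k"
  shows "a + c r \<in> {1..int d} \<Longrightarrow> b + e r \<in> {1..int d} \<Longrightarrow>
    conv_chain k d (\<lambda>j s t. if s = c (j - 1) - c j \<and> t = e (j - 1) - e j then 1 else 0) r X (a + c r) (b + e r)
    = (if (\<forall>j<r. a + c j \<in> {1..int d} \<and> b + e j \<in> {1..int d}) then X (a + c 0) (b + e 0) else 0)"
proof (induction r)
  case 0
  then show ?case by simp
next
  case (Suc r)
  let ?Ks = "(\<lambda>j s t. if s = c (j - 1) - c j \<and> t = e (j - 1) - e j then 1 else (0::real))"
  have "conv_chain k d ?Ks (Suc r) X (a + c (Suc r)) (b + e (Suc r))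
      = iota d (conv_chain k d ?Ks r X) (a + c r) (b + e r)"
    using conv_shift[of "c r - c (Suc r)" k "e r - e (Suc r)" d "conv_chain k d ?Ks r X"
        "a + c (Suc r)" "b + e (Suc r)"] steps[of r]
    by simp
  also have "\<dots> = (if (\<forall>j<Suc r. a + c j \<in> {1..int d} \<and> b + e j \<in> {1..int d}) then X (a + c 0) (b + e 0) else 0)"
  proof (cases "a + c r \<in> {1..int d} \<and> b + e r \<in> {1..int d}")
    case True
    then show ?thesis using Suc.IH
      by (simp add: iota_def less_Suc_eq)
  next
    case False
    then show ?thesis unfolding iota_def by (auto simp: less_Suc_eq)
  qed
  finally show ?case .
qed

definition tent :: "int \<Rightarrow> int \<Rightarrow> nat \<Rightarrow> int" where
  "tent A B j = (if int j \<le> 2*B then -(B - \<bar>int j - B\<bar>) else A - \<bar>int j - (2*B+1+A)\<bar>)"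

lemma tent_step: "B \<ge> 0 \<Longrightarrow> A \<ge> 0 \<Longrightarrow> \<bar>tent A B j - tent A B (Suc j)\<bar> \<le> 1"
  unfolding tent_def by (simp add: abs_if)

lemma tent_bounds: "B \<ge> 0 \<Longrightarrow> A \<ge> 0 \<Longrightarrow> int j \<le> 2*A+2*B+1 \<Longrightarrow> -B \<le> tent A B j \<and> tent A B j \<le> A"
  unfolding tent_def by (simp add: abs_if)

lemma tent_0: "B \<ge> 0 \<Longrightarrow> tent A B 0 = 0"
  unfolding tent_def by simp

lemma tent_end: "B \<ge> 0 \<Longrightarrow> A \<ge> 0 \<Longrightarrow> int r = 2*A + 2*B + 1 \<Longrightarrow> tent A B r = 0"
  unfolding tent_def by simp

lemma tent_B: "B \<ge> 0 \<Longrightarrow> tent A B (nat B) = -B"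
  unfolding tent_def by simp

lemma tent_A: "B \<ge> 0 \<Longrightarrow> A \<ge> 0 \<Longrightarrow> tent A B (nat (2*B+1+A)) = A"
  unfolding tent_def by simp

lemma tent_cond:
  assumes "1 \<le> m" "m \<le> int d" "a \<in> {1..int d}" "int r = 2*(int d - m) + 2*(m-1) + 1"
  shows "(\<forall>j<r. a + tent (int d - m) (m - 1) j \<in> {1..int d}) \<longleftrightarrow> a = m"
proof
  assume H: "\<forall>j<r. a + tent (int d - m) (m - 1) j \<in> {1..int d}"
  have "a \<ge> m"
  proof (cases "m = 1")
    case True then show ?thesis using assms by simp
  next
    case False
    then have "nat (m-1) < r" using assms by (simp add: nat_less_iff)
    then show ?thesis using H[rule_format, of "nat (m-1)"] tent_B[of "m-1" "int d - m"] assms by simp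
  qed
  moreover have "a \<le> m"
  proof (cases "m = int d")
    case True then show ?thesis using assms by simp
  next
    case False
    then have "nat (2*(m-1)+1+(int d - m)) < r" using assms by (simp add: nat_less_iff)
    then show ?thesis using H[rule_format, of "nat (2*(m-1)+1+(int d - m))"]
        tent_A[of "m-1" "int d - m"] assms by simp
  qed
  ultimately show "a = m" by simp
next
  assume "a = m"
  show "\<forall>j<r. a + tent (int d - m) (m - 1) j \<in> {1..int d}"
  proof (intro allI impI)
    fix j assume "j < r"
    then have "int j \<le> 2*(int d - m) + 2*(m-1) + 1" using assms by linarith
    then have "-(m-1) \<le> tent (int d - m) (m - 1) j \<and> tent (int d - m) (m - 1) j \<le> int d - m"
      using tent_bounds[of "m-1" "int d - m" j] assms by linarith
    then show "a + tent (int d - m) (m - 1) j \<in> {1..int d}" using \<open>a = m\<close> by simp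
  qed
qed

theorem lemmaC1:
  fixes k d :: nat and m n :: int
  assumes "k \<ge> 1"
    and "m \<in> {1..int d}" and "n \<in> {1..int d}"
  shows "\<exists>(r::nat) (Ks :: nat \<Rightarrow> int \<Rightarrow> int \<Rightarrow> real).
           1 \<le> r \<and> real r \<le> 5/2 * real d - 1 \<and>
           (\<forall>X :: int \<Rightarrow> int \<Rightarrow> real.
              (\<forall>a\<in>{1..int d}. \<forall>b\<in>{1..int d}. X a b \<in> {0..1}) \<longrightarrow>
              (\<forall>a\<in>{1..int d}. \<forall>b\<in>{1..int d}.
                 Delta m n X a b = conv_chain k d Ks r X a b))"
proof -
  define r where "r = 2*d - 1"
  define c where "c = tent (int d - m) (m - 1)"
  define e where "e = tent (int d - n) (n - 1)"
  define Ks where "Ks = (\<lambda>j s t. if s = c (j - 1) - c j \<and> t = e (j - 1) - e j then 1 else (0::real))"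
  have d1: "d \<ge> 1" using assms by auto
  have rr: "int r = 2*(int d - m) + 2*(m-1) + 1" "int r = 2*(int d - n) + 2*(n-1) + 1"
    using d1 unfolding r_def by auto
  have steps: "\<And>j. \<bar>c j - c (Suc j)\<bar> \<le> int k \<and> \<bar>e j - e (Suc j)\<bar> \<le> int k"
  proof -
    fix j
    have "\<bar>c j - c (Suc j)\<bar> \<le> 1" "\<bar>e j - e (Suc j)\<bar> \<le> 1"
      using tent_step[of "m-1" "int d - m" j] tent_step[of "n-1" "int d - n" j] assms
      unfolding c_def e_def by auto
    moreover have "(1::int) \<le> int k" using assms by simp
    ultimately show "\<bar>c j - c (Suc j)\<bar> \<le> int k \<and> \<bar>e j - e (Suc j)\<bar> \<le> int k" by linarith
  qed
  have cr: "c r = 0" "e r = 0" "c 0 = 0" "e 0 = 0"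
    unfolding c_def e_def using tent_end rr tent_0 assms by auto
  show ?thesis
  proof (intro exI conjI allI impI ballI)
    show "1 \<le> r" using d1 unfolding r_def by simp
    show "real r \<le> 5/2 * real d - 1" using d1 unfolding r_def by (simp add: of_nat_diff)
    fix X :: "int \<Rightarrow> int \<Rightarrow> real" and a b
    assume a: "a \<in> {1..int d}" and b: "b \<in> {1..int d}"
    have "conv_chain k d Ks r X a b
       = (if (\<forall>j<r. a + c j \<in> {1..int d} \<and> b + e j \<in> {1..int d}) then X (a + c 0) (b + e 0) else 0)"
      using chain_path[of c k e a r d b X, OF steps] a b cr unfolding Ks_def by simp
    also have "\<dots> = Delta m n X a b"
      using tent_cond[of m d a r] tent_cond[of n d b r] assms a b rr cr
      unfolding Delta_def c_def e_def by auto
    finally show "Delta m n X a b = conv_chain k d Ks r X a b" by simp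
  qed
qed

end
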